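(* In the setting of the context, assume $G''(p_1)<0$ and $G''(p_2)<0$, and that $\ell\in(0,\min\{L,1-L\})$ is chosen so that $$\big[(L-\ell)G''(p_1)+(1-L-\ell)G''(p_2)\big]e^{-K_1}+2\ell K_2e^{K_1}<0.$$ Then $I_{\theta_0+c}(1)<0<I_{\theta_0-c}(1)$ for all sufficiently small $c>0$.
   Context: Let $G\in\mathrm{C}^2(\mathbb{R})$ be coercive ($G(p)\to\infty$ as $p\to\pm\infty$), $p_1<p_2$ with $G'(p_1)<0<G'(p_2)$, $L=\frac{G'(p_2)}{G'(p_2)-G'(p_1)}$, $K_1=\max\{|G'(p)|:\,p\in[p_1,p_2]\}$, $K_2=\max\{|G''(p)|:\,p\in[p_1,p_2]\}$. Given $\ell$, let $f$ be a $1$-periodic function in $\mathrm{C}^1(\mathbb{R})$ with $f'$ Lipschitz, $p_1\le f\le p_2$, $f=p_1$ on $[0,L-\ell]$, $f=p_2$ on $[L,1-\ell]$, and $\int_0^1G'(f(x))dx=0$. Define the $1$-periodic Lipschitz potential $V(x)=-f'(x)-G(f(x))$ and $\theta_0=\int_0^1f(x)dx$. For each $\theta\in\mathbb{R}$, $f_\theta\in\mathrm{C}^1(\mathbb{R})$ denotes the unique $1$-periodic function with $\int_0^1f_\theta=\theta$ and $f_\theta'+G(f_\theta)+V=\overline{H}(\theta)$ on $\mathbb{R}$ for some (unique) constant $\overline{H}(\theta)$; and $I_\theta(1)=\int_0^1G'(f_\theta(x))dx$. *)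

theory Defs
  imports "HOL-Analysis.Analysis"
begin

definition periodic1 :: "(real \<Rightarrow> real) \<Rightarrow> bool" where
  "periodic1 g \<longleftrightarrow> (\<forall>x. g (x + 1) = g x)"

definition corrector :: "(real \<Rightarrow> real) \<Rightarrow> (real \<Rightarrow> real) \<Rightarrow> real \<Rightarrow> (real \<Rightarrow> real) \<Rightarrow> bool" where
  "corrector G V \<theta> g \<longleftrightarrow>
     periodic1 g \<and>
     integral {0..1} g = \<theta> \<and>
     (\<exists>g'. (\<forall>x. (g has_real_derivative g' x) (at x)) \<and> continuous_on UNIV g' \<and>
           (\<exists>H. \<forall>x. g' x + G (g x) + V x = H))"

end

theory Submission
  imports Defs
begin
lemma per_nat:
  assumes "periodic1 g" shows "g (x + real n) = g x"
proof (induction n)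
  case 0 then show ?case by simp
next
  case (Suc n)
  have "g (x + real (Suc n)) = g ((x + real n) + 1)" by (simp add: algebra_simps)
  also have "\<dots> = g (x + real n)" using assms unfolding periodic1_def by blast
  finally show ?case using Suc by simp
qed

lemma per_int:
  assumes "periodic1 g" shows "g (x + of_int k) = g x"
proof (cases "k \<ge> 0")
  case True
  then obtain n where "k = int n" using nonneg_int_cases by blast
  then show ?thesis using per_nat[OF assms] by simp
next
  case False
  define n where "n = nat (- k)"
  have n: "k = - int n" using False by (simp add: n_def)
  have "g (x + of_int k) = g ((x + of_int k) + real n)" using per_nat[OF assms] by simp
  also have "\<dots> = g x" using n by simp
  finally show ?thesis .
qed

lemma per_frac:
  assumes "periodic1 g" shows "g x = g (frac x)"
  using per_int[OF assms, of "frac x" "\<lfloor>x\<rfloor>"] by (simp add: frac_def)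

lemma frac_in: "frac x \<in> {0..1}"
  using frac_lt_1[of x] frac_ge_0[of x] by auto

lemma bound_cont:
  fixes \<phi> :: "real \<Rightarrow> real"
  assumes "continuous_on {a..b} \<phi>"
  shows "\<exists>B\<ge>0. \<forall>x\<in>{a..b}. \<bar>\<phi> x\<bar> \<le> B"
proof -
  have "bounded (\<phi> ` {a..b})"
    using compact_imp_bounded compact_continuous_image[OF assms] by blast
  then obtain B where "\<forall>y\<in>\<phi> ` {a..b}. norm y \<le> B" by (auto simp: bounded_iff)
  then have "\<forall>x\<in>{a..b}. \<bar>\<phi> x\<bar> \<le> max B 0" by force
  then show ?thesis by (intro exI[of _ "max B 0"]) auto
qed

lemma int_bound:
  fixes \<phi> :: "real \<Rightarrow> real"
  assumes "a \<le> b" "continuous_on {a..b} \<phi>" "\<And>t. t \<in> {a..b} \<Longrightarrow> lo \<le> \<phi> t \<and> \<phi> t \<le> hi"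
  shows "lo * (b - a) \<le> integral {a..b} \<phi> \<and> integral {a..b} \<phi> \<le> hi * (b - a)"
proof -
  have i: "\<phi> integrable_on {a..b}" using assms(2) integrable_continuous_interval by blast
  have "integral {a..b} (\<lambda>t. lo) \<le> integral {a..b} \<phi>"
    by (rule integral_le) (use i assms(3) in auto)
  moreover have "integral {a..b} \<phi> \<le> integral {a..b} (\<lambda>t. hi)"
    by (rule integral_le) (use i assms(3) in auto)
  ultimately show ?thesis using assms(1) by (simp add: mult.commute)
qed

lemma sec_mvt:
  fixes G G' :: "real \<Rightarrow> real"
  assumes "\<And>x. (G has_real_derivative G' x) (at x)" "u \<noteq> v"
  shows "\<exists>\<xi>. min u v < \<xi> \<and> \<xi> < max u v \<and> G u - G v = (u - v) * G' \<xi>"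
proof (cases "u < v")
  case True
  from MVT2[OF True, of G G'] assms(1) obtain z where "u < z" "z < v" "G v - G u = (v - u) * G' z" by blast
  then show ?thesis using True by (intro exI[of _ z]) (auto simp: algebra_simps)
next
  case False
  then have "v < u" using assms(2) by auto
  from MVT2[OF this, of G G'] assms(1) obtain z where "v < z" "z < u" "G u - G v = (u - v) * G' z" by blast
  then show ?thesis using \<open>v < u\<close> by (intro exI[of _ z]) auto
qed

lemma sec_cont:
  fixes G G' u v :: "real \<Rightarrow> real"
  assumes Gd: "\<And>x. (G has_real_derivative G' x) (at x)" and G'c: "\<And>x. isCont G' x"
    and u: "isCont u x0" and v: "isCont v x0"
  shows "isCont (\<lambda>x. if u x = v x then G' (v x) else (G (u x) - G (v x)) / (u x - v x)) x0"
proof (cases "u x0 = v x0")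
  case False
  have Gc: "\<And>x. isCont G x" using Gd DERIV_isCont by blast
  have Q: "isCont (\<lambda>x. (G (u x) - G (v x)) / (u x - v x)) x0"
  proof -
    have "isCont (\<lambda>x. G (u x)) x0" "isCont (\<lambda>x. G (v x)) x0"
      using isCont_o2[OF u Gc] isCont_o2[OF v Gc] by auto
    then show ?thesis using False u v by (intro continuous_intros) auto
  qed
  have "isCont (\<lambda>x. u x - v x) x0" using u v by (intro continuous_intros)
  then have "((\<lambda>x. u x - v x) \<longlongrightarrow> u x0 - v x0) (at x0)" by (simp add: isCont_def)
  then have ev: "eventually (\<lambda>x. u x - v x \<noteq> 0) (at x0)"
    by (rule tendsto_imp_eventually_ne) (use False in auto)
  have "((\<lambda>x. (G (u x) - G (v x)) / (u x - v x)) \<longlongrightarrow> (G (u x0) - G (v x0)) / (u x0 - v x0)) (at x0)"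
    using Q by (simp add: isCont_def)
  then have "((\<lambda>x. if u x = v x then G' (v x) else (G (u x) - G (v x)) / (u x - v x))
       \<longlongrightarrow> (G (u x0) - G (v x0)) / (u x0 - v x0)) (at x0)"
    by (rule Lim_transform_eventually) (use ev in \<open>auto elim: eventually_mono\<close>)
  then show ?thesis using False by (simp add: isCont_def)
next
  case True
  define p where "p = v x0"
  show ?thesis
    unfolding continuous_at_eps_delta
  proof (intro allI impI)
    fix e :: real assume e: "e > 0"
    obtain d where d: "d > 0" "\<And>q. dist q p < d \<Longrightarrow> dist (G' q) (G' p) < e"
      using G'c[of p] e unfolding continuous_at_eps_delta by blast
    obtain d1 where d1: "d1 > 0" "\<And>x. dist x x0 < d1 \<Longrightarrow> dist (u x) (u x0) < d"
      using u d(1) unfolding continuous_at_eps_delta by blast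
    obtain d2 where d2: "d2 > 0" "\<And>x. dist x x0 < d2 \<Longrightarrow> dist (v x) (v x0) < d"
      using v d(1) unfolding continuous_at_eps_delta by blast
    show "\<exists>d>0. \<forall>x'. dist x' x0 < d \<longrightarrow>
      dist (if u x' = v x' then G' (v x') else (G (u x') - G (v x')) / (u x' - v x'))
           (if u x0 = v x0 then G' (v x0) else (G (u x0) - G (v x0)) / (u x0 - v x0)) < e"
    proof (intro exI[of _ "min d1 d2"] conjI allI impI)
      show "min d1 d2 > 0" using d1 d2 by auto
      fix x assume x: "dist x x0 < min d1 d2"
      have du: "\<bar>u x - p\<bar> < d" using d1(2)[of x] x True by (auto simp: p_def dist_real_def)
      have dv: "\<bar>v x - p\<bar> < d" using d2(2)[of x] x by (auto simp: p_def dist_real_def)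
      show "dist (if u x = v x then G' (v x) else (G (u x) - G (v x)) / (u x - v x))
           (if u x0 = v x0 then G' (v x0) else (G (u x0) - G (v x0)) / (u x0 - v x0)) < e"
      proof (cases "u x = v x")
        case True
        then show ?thesis using d(2)[of "v x"] dv \<open>u x0 = v x0\<close> by (simp add: p_def dist_real_def)
      next
        case False
        obtain \<xi> where xi: "min (u x) (v x) < \<xi>" "\<xi> < max (u x) (v x)" "G (u x) - G (v x) = (u x - v x) * G' \<xi>"
          using sec_mvt[OF Gd False] by blast
        have "(G (u x) - G (v x)) / (u x - v x) = G' \<xi>" using xi(3) False by simp
        moreover have "dist \<xi> p < d" using xi(1,2) du dv by (auto simp: dist_real_def)
        ultimately show ?thesis using d(2)[of \<xi>] False \<open>u x0 = v x0\<close> by (simp add: p_def)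
      qed
    qed
  qed
qed

lemma ftc_sign:
  fixes F d :: "real \<Rightarrow> real"
  assumes der: "\<And>x. x \<in> {a..b} \<Longrightarrow> (F has_real_derivative d x) (at x within {a..b})"
    and s: "\<And>x. x \<in> {a..b} \<Longrightarrow> 0 \<le> d x" and ab: "a \<le> u" "u \<le> v" "v \<le> b"
  shows "F u \<le> F v"
proof -
  have "(d has_integral (F v - F u)) {u..v}"
  proof (rule fundamental_theorem_of_calculus[OF ab(2)])
    fix x assume x: "x \<in> {u..v}"
    have "(F has_real_derivative d x) (at x within {a..b})" using der x ab by auto
    then have "(F has_real_derivative d x) (at x within {u..v})"
      by (rule DERIV_subset) (use ab in auto)
    then show "(F has_vector_derivative d x) (at x within {u..v})"
      by (simp add: has_real_derivative_iff_has_vector_derivative)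
  qed
  then have "0 \<le> F v - F u" by (rule has_integral_nonneg) (use s ab in auto)
  then show ?thesis by simp
qed

lemma between:
  fixes F d :: "real \<Rightarrow> real"
  assumes der: "\<And>x. x \<in> {a..b} \<Longrightarrow> (F has_real_derivative d x) (at x within {a..b})"
    and s: "(\<forall>x\<in>{a..b}. 0 \<le> d x) \<or> (\<forall>x\<in>{a..b}. d x \<le> 0)"
    and x: "x \<in> {a..b}"
  shows "min (F a) (F b) \<le> F x \<and> F x \<le> max (F a) (F b)"
  using s
proof
  assume s: "\<forall>x\<in>{a..b}. 0 \<le> d x"
  have "F a \<le> F x" "F x \<le> F b" using ftc_sign[OF der] s x by auto
  then show ?thesis by auto
next
  assume s: "\<forall>x\<in>{a..b}. d x \<le> 0"
  have der': "\<And>x. x \<in> {a..b} \<Longrightarrow> ((\<lambda>x. - F x) has_real_derivative - d x) (at x within {a..b})"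
    using der by (intro derivative_intros) auto
  have "- F a \<le> - F x" "- F x \<le> - F b" using ftc_sign[OF der'] s x by auto
  then show ?thesis by auto
qed

lemma int_upper:
  fixes \<phi> :: "real \<Rightarrow> real"
  assumes "a \<le> b" "continuous_on {a..b} \<phi>" "\<And>t. t \<in> {a..b} \<Longrightarrow> \<phi> t \<le> hi"
  shows "integral {a..b} \<phi> \<le> hi * (b - a)"
proof -
  have i: "\<phi> integrable_on {a..b}" using assms(2) integrable_continuous_interval by blast
  have "integral {a..b} \<phi> \<le> integral {a..b} (\<lambda>t. hi)"
    by (rule integral_le) (use i assms(3) in auto)
  then show ?thesis using assms(1) by (simp add: mult.commute)
qed

lemma core:
  fixes G G' G'' f f' V g g' :: "real \<Rightarrow> real"
    and \<sigma> c H p1 p2 L ell K1 K2 R1 R2 Ka Kp \<eta> \<epsilon> \<delta> P Q :: real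
  assumes G_deriv: "\<And>x. (G has_real_derivative G' x) (at x)"
    and G'_deriv: "\<And>x. (G' has_real_derivative G'' x) (at x)"
    and G''c: "\<And>x. isCont G'' x"
    and f_deriv: "\<And>x. (f has_real_derivative f' x) (at x)"
    and g_deriv: "\<And>x. (g has_real_derivative g' x) (at x)"
    and f01: "f 1 = f 0" and g01: "g 1 = g 0"
    and f_eq: "\<And>x. f' x + G (f x) + V x = 0"
    and g_eq: "\<And>x. g' x + G (g x) + V x = H"
    and sig: "\<sigma> = 1 \<or> \<sigma> = -1"
    and cpos: "0 < c"
    and kint: "integral {0..1} (\<lambda>x. \<sigma> * (g x - f x)) = c"
    and range_imp: "(\<forall>x\<in>{0..1}. 0 < \<sigma> * (g x - f x)) \<Longrightarrow> \<forall>x\<in>{0..1}. R1 \<le> g x \<and> g x \<le> R2"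
    and f_range: "\<And>x. R1 \<le> f x \<and> f x \<le> R2"
    and Ka0: "0 \<le> Ka" and Ka: "\<And>p. p \<in> {R1..R2} \<Longrightarrow> \<bar>G' p\<bar> \<le> Ka"
    and Kp0: "0 \<le> Kp" and Kp: "\<And>p. p \<in> {R1..R2} \<Longrightarrow> \<bar>G'' p\<bar> \<le> Kp"
    and uc: "\<And>p q. p \<in> {R1..R2} \<Longrightarrow> q \<in> {R1..R2} \<Longrightarrow> \<bar>p - q\<bar> < \<eta> \<Longrightarrow> \<bar>G'' p - G'' q\<bar> < \<epsilon>"
    and small: "c * exp (4 * Ka) < \<eta>"
    and dlt: "Kp * exp (4 * Ka) * c \<le> \<delta>"
    and K1b: "\<And>x. \<bar>G' (f x)\<bar> \<le> K1"
    and K2b: "\<And>x. \<bar>G'' (f x)\<bar> \<le> K2"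
    and fint: "integral {0..1} (\<lambda>x. G' (f x)) = 0"
    and f_low: "\<And>x. x \<in> {0..L - ell} \<Longrightarrow> f x = p1"
    and f_high: "\<And>x. x \<in> {L..1 - ell} \<Longrightarrow> f x = p2"
    and G''neg: "G'' p1 < 0" "G'' p2 < 0"
    and ell: "0 < ell" "ell < L" "ell < 1 - L"
    and P_def: "P = ((L - ell) * G'' p1 + (1 - L - ell) * G'' p2) * exp (- K1)"
    and Q_def: "Q = 2 * ell * K2 * exp K1"
    and brk: "P * exp (- 2 * \<delta>) + Q * exp (2 * \<delta>) \<le> (P + Q) / 2"
    and PQ: "P + Q < 0"
    and eps: "\<epsilon> = - exp (- 2 * Ka) * (P + Q) / 4"
  shows "\<sigma> * integral {0..1} (\<lambda>x. G' (g x)) < 0"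
proof -
  have fc: "\<And>x. isCont f x" using f_deriv DERIV_isCont by blast
  have gc: "\<And>x. isCont g x" using g_deriv DERIV_isCont by blast
  have G'c: "\<And>x. isCont G' x" using G'_deriv DERIV_isCont by blast
  have Gc: "\<And>x. isCont G x" using G_deriv DERIV_isCont by blast
  have fcon: "continuous_on S f" for S using fc by (simp add: continuous_at_imp_continuous_on)
  have gcon: "continuous_on S g" for S using gc by (simp add: continuous_at_imp_continuous_on)
  have G'fcon: "continuous_on S (\<lambda>x. G' (f x))" for S
    using isCont_o2[OF fc G'c] by (simp add: continuous_at_imp_continuous_on)
  have G'gcon: "continuous_on S (\<lambda>x. G' (g x))" for S
    using isCont_o2[OF gc G'c] by (simp add: continuous_at_imp_continuous_on)
  have G''fcon: "continuous_on S (\<lambda>x. G'' (f x))" for S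
    using isCont_o2[OF fc G''c] by (simp add: continuous_at_imp_continuous_on)
  define a where "a x = (if g x = f x then G' (f x) else (G (g x) - G (f x)) / (g x - f x))" for x
  have acon: "continuous_on S a" for S
    unfolding a_def using sec_cont[OF G_deriv G'c gc fc]
    by (simp add: continuous_at_imp_continuous_on)
  have a_prop: "a x * (g x - f x) = G (g x) - G (f x)" for x
    by (simp add: a_def)
  define A where "A x = integral {0..x} a" for x
  have A_der: "(A has_real_derivative a x) (at x within {0..1})" if "x \<in> {0..1}" for x
    unfolding A_def by (rule integral_has_real_derivative[OF acon that])
  have A0: "A 0 = 0" by (simp add: A_def)
  define k where "k x = \<sigma> * (g x - f x)" for x
  have kcon: "continuous_on S k" for S unfolding k_def using fcon gcon by (intro continuous_intros)
  have k_der: "(k has_real_derivative \<sigma> * (g' x - f' x)) (at x)" for x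
    unfolding k_def using g_deriv f_deriv by (intro derivative_eq_intros) auto
  define F where "F x = exp (A x) * k x" for x
  have F_der: "(F has_real_derivative \<sigma> * H * exp (A x)) (at x within {0..1})" if "x \<in> {0..1}" for x
  proof -
    have "(F has_real_derivative exp (A x) * a x * k x + exp (A x) * (\<sigma> * (g' x - f' x))) (at x within {0..1})"
      unfolding F_def
      using A_der[OF that] DERIV_subset[OF k_der[of x], of "{0..1}"]
      by (intro derivative_eq_intros) auto
    moreover have "exp (A x) * a x * k x + exp (A x) * (\<sigma> * (g' x - f' x)) = \<sigma> * H * exp (A x)"
    proof -
      have "a x * k x = \<sigma> * (G (g x) - G (f x))" unfolding k_def using a_prop[of x]
        by (metis mult.left_commute)
      moreover have "G (g x) - G (f x) + (g' x - f' x) = H" using g_eq[of x] f_eq[of x] by simp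
      ultimately have eq: "a x * k x + \<sigma> * (g' x - f' x) = \<sigma> * H" by (metis distrib_left)
      have "exp (A x) * a x * k x + exp (A x) * (\<sigma> * (g' x - f' x)) = exp (A x) * (a x * k x + \<sigma> * (g' x - f' x))"
        by (simp add: algebra_simps)
      also have "\<dots> = exp (A x) * (\<sigma> * H)" by (simp only: eq)
      finally show ?thesis by simp
    qed
    ultimately show ?thesis by simp
  qed
  have sgn: "(\<forall>x\<in>{0..1}. 0 \<le> \<sigma> * H * exp (A x)) \<or> (\<forall>x\<in>{0..1}. \<sigma> * H * exp (A x) \<le> 0)"
  proof (cases "0 \<le> \<sigma> * H")
    case True then show ?thesis by auto
  next
    case False
    have "\<sigma> * H * exp (A x) \<le> 0" for x
      by (rule mult_nonpos_nonneg) (use False in auto)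
    then show ?thesis by auto
  qed
  have Fb: "min (F 0) (F 1) \<le> F x \<and> F x \<le> max (F 0) (F 1)" if "x \<in> {0..1}" for x
    by (rule between[OF F_der sgn that])
  have F0: "F 0 = k 0" by (simp add: F_def A0)
  have F1: "F 1 = exp (A 1) * k 0" by (simp add: F_def k_def f01 g01)
  have kF: "k x = F x * exp (- A x)" for x by (simp add: F_def exp_minus field_simps)
  have kint': "integral {0..1} k = c" using kint unfolding k_def by (simp only:)
  have k0pos: "k 0 > 0"
  proof (rule ccontr)
    assume "\<not> k 0 > 0"
    then have "k 0 \<le> 0" by simp
    moreover have "exp (A 1) * k 0 \<le> 0" using \<open>k 0 \<le> 0\<close> by (simp add: mult_nonneg_nonpos)
    ultimately have "F x \<le> 0" if "x \<in> {0..1}" for x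
      using Fb[OF that] F0 F1 by linarith
    then have "k x \<le> 0" if "x \<in> {0..1}" for x
      using kF[of x] that by (simp add: mult_nonpos_nonneg)
    then have "integral {0..1} k \<le> 0 * (1 - 0)"
      by (intro int_upper kcon) auto
    then show False using kint' cpos by simp
  qed
  have Fpos: "F x > 0" if "x \<in> {0..1}" for x
  proof -
    have "exp (A 1) * k 0 > 0" using k0pos by simp
    then have "min (F 0) (F 1) > 0" using F0 F1 k0pos by simp
    then show ?thesis using Fb[OF that] by linarith
  qed
  have kpos: "k x > 0" if "x \<in> {0..1}" for x
    using Fpos[OF that] kF[of x] by simp
  have kabs: "\<bar>g x - f x\<bar> = k x" if "x \<in> {0..1}" for x
    using sig kpos[OF that] unfolding k_def by auto
  have gr: "R1 \<le> g x \<and> g x \<le> R2" if "x \<in> {0..1}" for x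
    using range_imp kpos that unfolding k_def by blast
  have a_b: "\<bar>a x\<bar> \<le> Ka \<and> \<bar>a x - G' (f x)\<bar> \<le> Kp * k x" if x01: "x \<in> {0..1}" for x
  proof -
    have ne: "g x \<noteq> f x" using kpos[OF x01] unfolding k_def by auto
    obtain \<xi> where xi: "min (g x) (f x) < \<xi>" "\<xi> < max (g x) (f x)" "G (g x) - G (f x) = (g x - f x) * G' \<xi>"
      using sec_mvt[OF G_deriv ne] by blast
    have ax: "a x = G' \<xi>" using xi(3) ne by (simp add: a_def)
    have xiR: "\<xi> \<in> {R1..R2}" using xi(1,2) gr[OF x01] f_range[of x] by auto
    have 1: "\<bar>a x\<bar> \<le> Ka" using Ka[OF xiR] ax by simp
    have ne2: "\<xi> \<noteq> f x" using xi(1,2) by auto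
    obtain \<zeta> where ze: "min \<xi> (f x) < \<zeta>" "\<zeta> < max \<xi> (f x)" "G' \<xi> - G' (f x) = (\<xi> - f x) * G'' \<zeta>"
      using sec_mvt[OF G'_deriv ne2] by blast
    have zeR: "\<zeta> \<in> {R1..R2}" using ze(1,2) xiR f_range[of x] by auto
    have "\<bar>a x - G' (f x)\<bar> = \<bar>\<xi> - f x\<bar> * \<bar>G'' \<zeta>\<bar>" using ax ze(3) by (simp add: abs_mult)
    also have "\<dots> \<le> k x * Kp"
    proof (rule mult_mono)
      show "\<bar>\<xi> - f x\<bar> \<le> k x" using xi(1,2) kabs[OF x01] by auto
      show "\<bar>G'' \<zeta>\<bar> \<le> Kp" using Kp[OF zeR] .
      show "0 \<le> k x" using kpos[OF x01] by simp
    qed simp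
    finally show ?thesis using 1 by (simp add: mult.commute)
  qed
  have A_b: "\<bar>A x\<bar> \<le> Ka" if x01: "x \<in> {0..1}" for x
  proof -
    have "-Ka * (x - 0) \<le> integral {0..x} a \<and> integral {0..x} a \<le> Ka * (x - 0)"
    proof (rule int_bound)
      fix t assume t: "t \<in> {0..x}"
      then have "\<bar>a t\<bar> \<le> Ka" using a_b[of t] x01 by auto
      then show "- Ka \<le> a t \<and> a t \<le> Ka" by auto
    qed (use x01 acon in auto)
    moreover have "Ka * x \<le> Ka" using x01 Ka0 by (simp add: mult_left_le)
    ultimately show ?thesis unfolding A_def by auto
  qed
  have expKa: "exp Ka * exp Ka = exp (2 * Ka)" by (simp only: exp_add[symmetric] mult_2)
  have expKa': "exp (- Ka) * exp (- Ka) = exp (- 2 * Ka)"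
    by (simp only: exp_add[symmetric] mult_2 mult_minus_left minus_add_distrib)
  have expKa'': "exp (2 * Ka) * exp (2 * Ka) = exp (4 * Ka)" by (simp add: exp_add[symmetric])
  have expKa''': "exp (- 2 * Ka) * exp (2 * Ka) = 1" by (simp add: exp_add[symmetric])
  have crude_up: "k x \<le> k 0 * exp (2 * Ka)" if x01: "x \<in> {0..1}" for x
  proof -
    have "exp (A 1) \<le> exp Ka" using A_b[of 1] by simp
    then have "exp (A 1) * k 0 \<le> exp Ka * k 0" using k0pos by simp
    moreover have "k 0 \<le> exp Ka * k 0" using k0pos Ka0 by simp
    ultimately have "max (F 0) (F 1) \<le> k 0 * exp Ka" unfolding F0 F1
      by (intro max.boundedI) (simp_all add: mult.commute)
    then have "F x \<le> k 0 * exp Ka" using Fb[OF x01] by linarith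
    moreover have "exp (- A x) \<le> exp Ka" using A_b[OF x01] by simp
    ultimately have "F x * exp (- A x) \<le> (k 0 * exp Ka) * exp Ka"
      using Fpos[OF x01] k0pos by (intro mult_mono) auto
    then show ?thesis using kF[of x] expKa by (simp add: mult.assoc)
  qed
  have crude_lo: "k 0 * exp (- 2 * Ka) \<le> k x" if x01: "x \<in> {0..1}" for x
  proof -
    have "exp (- Ka) \<le> exp (A 1)" using A_b[of 1] by simp
    then have "exp (- Ka) * k 0 \<le> exp (A 1) * k 0" using k0pos by simp
    moreover have "exp (- Ka) * k 0 \<le> k 0" using k0pos Ka0 by simp
    ultimately have "k 0 * exp (- Ka) \<le> min (F 0) (F 1)" unfolding F0 F1
      by (intro min.boundedI) (simp_all add: mult.commute)
    then have "k 0 * exp (- Ka) \<le> F x" using Fb[OF x01] by linarith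
    moreover have "exp (- Ka) \<le> exp (- A x)" using A_b[OF x01] by simp
    ultimately have "(k 0 * exp (- Ka)) * exp (- Ka) \<le> F x * exp (- A x)"
      using Fpos[OF x01] k0pos by (intro mult_mono) auto
    then show ?thesis using kF[of x] expKa' by (simp add: mult.assoc)
  qed
  have "k 0 * exp (- 2 * Ka) * (1 - 0) \<le> integral {0..1} k \<and> integral {0..1} k \<le> k 0 * exp (2 * Ka) * (1 - 0)"
    by (rule int_bound[OF _ kcon]) (use crude_up crude_lo in auto)
  then have kc1: "c \<le> k 0 * exp (2 * Ka)" and kc2: "k 0 * exp (- 2 * Ka) \<le> c"
    using kint' by auto
  have k0up: "k 0 \<le> c * exp (2 * Ka)"
  proof -
    have "k 0 = k 0 * exp (- 2 * Ka) * exp (2 * Ka)" using expKa''' by (simp add: mult.assoc)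
    also have "\<dots> \<le> c * exp (2 * Ka)" using kc2 by simp
    finally show ?thesis .
  qed
  have k0lo: "c * exp (- 2 * Ka) \<le> k 0"
  proof -
    have "c * exp (- 2 * Ka) \<le> k 0 * exp (2 * Ka) * exp (- 2 * Ka)" using kc1 by simp
    also have "\<dots> = k 0" using expKa''' by (simp add: mult.assoc mult.commute)
    finally show ?thesis .
  qed
  have ksmall: "k x \<le> c * exp (4 * Ka)" if x01: "x \<in> {0..1}" for x
  proof -
    have "k x \<le> k 0 * exp (2 * Ka)" by (rule crude_up[OF x01])
    also have "\<dots> \<le> c * exp (2 * Ka) * exp (2 * Ka)" using k0up by simp
    finally show ?thesis using expKa'' by (simp add: mult.assoc)
  qed
  have d0: "0 \<le> \<delta>" using dlt Kp0 cpos by (smt (verit) exp_gt_zero mult_nonneg_nonneg)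
  have aphi: "\<bar>a x - G' (f x)\<bar> \<le> \<delta>" if x01: "x \<in> {0..1}" for x
  proof -
    have "\<bar>a x - G' (f x)\<bar> \<le> Kp * k x" using a_b[OF x01] by simp
    also have "\<dots> \<le> Kp * (c * exp (4 * Ka))" using ksmall[OF x01] Kp0 by (simp add: mult_left_mono)
    also have "\<dots> \<le> \<delta>" using dlt by (simp add: ac_simps)
    finally show ?thesis .
  qed
  define \<Phi> where "\<Phi> x = integral {0..x} (\<lambda>t. G' (f t))" for x
  have AP: "\<bar>A x - \<Phi> x\<bar> \<le> \<delta>" if x01: "x \<in> {0..1}" for x
  proof -
    have "A x - \<Phi> x = integral {0..x} (\<lambda>t. a t - G' (f t))"
      unfolding A_def \<Phi>_def
      by (rule integral_diff[symmetric]) (use integrable_continuous_interval[OF acon] integrable_continuous_interval[OF G'fcon] in auto)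
    moreover have "- \<delta> * (x - 0) \<le> integral {0..x} (\<lambda>t. a t - G' (f t)) \<and> integral {0..x} (\<lambda>t. a t - G' (f t)) \<le> \<delta> * (x - 0)"
    proof (rule int_bound)
      fix t assume t: "t \<in> {0..x}"
      then have "\<bar>a t - G' (f t)\<bar> \<le> \<delta>" using aphi[of t] x01 by auto
      then show "- \<delta> \<le> a t - G' (f t) \<and> a t - G' (f t) \<le> \<delta>" by auto
    qed (use x01 acon G'fcon in \<open>auto intro!: continuous_intros\<close>)
    moreover have "\<delta> * x \<le> \<delta>" using x01 d0 by (simp add: mult_left_le)
    ultimately show ?thesis by auto
  qed
  have K10: "0 \<le> K1" using K1b[of 0] by linarith
  have Pb: "\<bar>\<Phi> x\<bar> \<le> K1" if x01: "x \<in> {0..1}" for x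
  proof -
    have "- K1 * (x - 0) \<le> \<Phi> x \<and> \<Phi> x \<le> K1 * (x - 0)"
      unfolding \<Phi>_def
    proof (rule int_bound)
      fix t assume t: "t \<in> {0..x}"
      show "- K1 \<le> G' (f t) \<and> G' (f t) \<le> K1" using K1b[of t] by auto
    qed (use x01 G'fcon in auto)
    moreover have "K1 * x \<le> K1" using x01 K10 by (simp add: mult_left_le)
    ultimately show ?thesis by auto
  qed
  have P1: "\<Phi> 1 = 0" using fint by (simp add: \<Phi>_def)
  have A1b: "\<bar>A 1\<bar> \<le> \<delta>" using AP[of 1] P1 by simp
  have Axb: "\<bar>A x\<bar> \<le> K1 + \<delta>" if x01: "x \<in> {0..1}" for x
    using AP[OF x01] Pb[OF x01] by linarith
  have fine_lo: "k 0 * exp (- K1) * exp (- 2 * \<delta>) \<le> k x" if x01: "x \<in> {0..1}" for x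
  proof -
    have "exp (- \<delta>) \<le> exp (A 1)" using A1b by simp
    then have "exp (- \<delta>) * k 0 \<le> exp (A 1) * k 0" using k0pos by simp
    moreover have "exp (- \<delta>) * k 0 \<le> k 0" using k0pos d0 by simp
    ultimately have "k 0 * exp (- \<delta>) \<le> min (F 0) (F 1)" unfolding F0 F1
      by (intro min.boundedI) (simp_all add: mult.commute)
    then have "k 0 * exp (- \<delta>) \<le> F x" using Fb[OF x01] by linarith
    moreover have "exp (- K1 - \<delta>) \<le> exp (- A x)" using Axb[OF x01] by simp
    ultimately have "(k 0 * exp (- \<delta>)) * exp (- K1 - \<delta>) \<le> F x * exp (- A x)"
      using Fpos[OF x01] k0pos by (intro mult_mono) auto
    moreover have "(k 0 * exp (- \<delta>)) * exp (- K1 - \<delta>) = k 0 * exp (- K1) * exp (- 2 * \<delta>)"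
      by (simp add: exp_add[symmetric] exp_diff[symmetric] mult.assoc)
    ultimately show ?thesis using kF[of x] by simp
  qed
  have fine_up: "k x \<le> k 0 * exp K1 * exp (2 * \<delta>)" if x01: "x \<in> {0..1}" for x
  proof -
    have "exp (A 1) \<le> exp \<delta>" using A1b by simp
    then have "exp (A 1) * k 0 \<le> exp \<delta> * k 0" using k0pos by simp
    moreover have "k 0 \<le> exp \<delta> * k 0" using k0pos d0 by simp
    ultimately have "max (F 0) (F 1) \<le> k 0 * exp \<delta>" unfolding F0 F1
      by (intro max.boundedI) (simp_all add: mult.commute)
    then have "F x \<le> k 0 * exp \<delta>" using Fb[OF x01] by linarith
    moreover have "exp (- A x) \<le> exp (K1 + \<delta>)" using Axb[OF x01] by simp
    ultimately have "F x * exp (- A x) \<le> (k 0 * exp \<delta>) * exp (K1 + \<delta>)"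
      using Fpos[OF x01] k0pos by (intro mult_mono) auto
    moreover have "(k 0 * exp \<delta>) * exp (K1 + \<delta>) = k 0 * exp K1 * exp (2 * \<delta>)"
      by (simp add: exp_add[symmetric] mult.assoc)
    ultimately show ?thesis using kF[of x] by simp
  qed
  have so: "\<sigma> * (G' (g x) - G' (f x)) \<le> (G'' (f x) + \<epsilon>) * k x" if x01: "x \<in> {0..1}" for x
  proof -
    have ne: "g x \<noteq> f x" using kpos[OF x01] unfolding k_def by auto
    obtain \<zeta> where ze: "min (g x) (f x) < \<zeta>" "\<zeta> < max (g x) (f x)" "G' (g x) - G' (f x) = (g x - f x) * G'' \<zeta>"
      using sec_mvt[OF G'_deriv ne] by blast
    have eq: "\<sigma> * (G' (g x) - G' (f x)) = k x * G'' \<zeta>" using ze(3) by (simp add: k_def)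
    have zeR: "\<zeta> \<in> {R1..R2}" using ze(1,2) gr[OF x01] f_range[of x] by auto
    have "\<bar>\<zeta> - f x\<bar> < k x" using ze(1,2) kabs[OF x01] by auto
    also have "\<dots> < \<eta>" using ksmall[OF x01] small by linarith
    finally have "\<bar>G'' \<zeta> - G'' (f x)\<bar> < \<epsilon>" using uc[OF zeR] f_range[of x] by auto
    then have "G'' \<zeta> \<le> G'' (f x) + \<epsilon>" by linarith
    then have "k x * G'' \<zeta> \<le> k x * (G'' (f x) + \<epsilon>)" using kpos[OF x01] by (simp add: mult_left_mono)
    then show ?thesis using eq by (simp add: mult.commute)
  qed
  define \<psi> where "\<psi> x = G'' (f x) * k x" for x
  have \<psi>con: "continuous_on S \<psi>" for S unfolding \<psi>_def using G''fcon kcon by (intro continuous_intros)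
  have int1: "\<sigma> * integral {0..1} (\<lambda>x. G' (g x)) = integral {0..1} (\<lambda>x. \<sigma> * (G' (g x) - G' (f x)))"
  proof -
    have e1: "integral {0..1} (\<lambda>x. \<sigma> * (G' (g x) - G' (f x))) = \<sigma> * integral {0..1} (\<lambda>x. G' (g x) - G' (f x))"
      by (rule integral_mult_right)
    have e2: "integral {0..1} (\<lambda>x. G' (g x) - G' (f x)) = integral {0..1} (\<lambda>x. G' (g x)) - integral {0..1} (\<lambda>x. G' (f x))"
      by (rule integral_diff) (use integrable_continuous_interval[OF G'gcon] integrable_continuous_interval[OF G'fcon] in auto)
    show ?thesis unfolding e1 e2 fint by simp
  qed
  have int2: "integral {0..1} (\<lambda>x. \<sigma> * (G' (g x) - G' (f x))) \<le> integral {0..1} (\<lambda>x. \<psi> x + \<epsilon> * k x)"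
  proof (rule integral_le)
    show "(\<lambda>x. \<sigma> * (G' (g x) - G' (f x))) integrable_on {0..1}"
      by (rule integrable_continuous_interval) (use G'gcon G'fcon in \<open>intro continuous_intros\<close>)
    show "(\<lambda>x. \<psi> x + \<epsilon> * k x) integrable_on {0..1}"
      by (rule integrable_continuous_interval) (use \<psi>con kcon in \<open>intro continuous_intros\<close>)
    fix x :: real assume "x \<in> {0..1}"
    then show "\<sigma> * (G' (g x) - G' (f x)) \<le> \<psi> x + \<epsilon> * k x" using so[of x] by (simp add: \<psi>_def algebra_simps)
  qed
  have int3: "integral {0..1} (\<lambda>x. \<psi> x + \<epsilon> * k x) = integral {0..1} \<psi> + \<epsilon> * c"
  proof -
    have "integral {0..1} (\<lambda>x. \<psi> x + \<epsilon> * k x) = integral {0..1} \<psi> + integral {0..1} (\<lambda>x. \<epsilon> * k x)"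
      by (rule integral_add) (auto intro!: integrable_continuous_interval continuous_intros \<psi>con kcon)
    then show ?thesis using kint' by simp
  qed
  define m where "m = k 0 * exp (- K1) * exp (- 2 * \<delta>)"
  define M where "M = k 0 * exp K1 * exp (2 * \<delta>)"
  have K20: "0 \<le> K2" using K2b[of 0] by linarith
  have i\<psi>: "\<psi> integrable_on {a..b}" for a b using integrable_continuous_interval[OF \<psi>con] .
  have split: "integral {0..1} \<psi> = integral {0..L-ell} \<psi> + integral {L-ell..L} \<psi> + integral {L..1-ell} \<psi> + integral {1-ell..1} \<psi>"
  proof -
    have "integral {0..1} \<psi> = integral {0..L-ell} \<psi> + integral {L-ell..1} \<psi>"
      using Henstock_Kurzweil_Integration.integral_combine[where a=0 and c="L-ell" and b=1 and f=\<psi>] i\<psi> ell by simp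
    moreover have "integral {L-ell..1} \<psi> = integral {L-ell..L} \<psi> + integral {L..1} \<psi>"
      using Henstock_Kurzweil_Integration.integral_combine[where a="L-ell" and c=L and b=1 and f=\<psi>] i\<psi> ell by simp
    moreover have "integral {L..1} \<psi> = integral {L..1-ell} \<psi> + integral {1-ell..1} \<psi>"
      using Henstock_Kurzweil_Integration.integral_combine[where a=L and c="1-ell" and b=1 and f=\<psi>] i\<psi> ell by simp
    ultimately show ?thesis by simp
  qed
  have J1: "integral {0..L-ell} \<psi> \<le> G'' p1 * m * (L - ell - 0)"
  proof (rule int_upper)
    fix t assume t: "t \<in> {0..L-ell}"
    then have t01: "t \<in> {0..1}" using ell by auto
    have "\<psi> t = G'' p1 * k t" using f_low[OF t] by (simp add: \<psi>_def)
    also have "\<dots> \<le> G'' p1 * m" using fine_lo[OF t01] G''neg(1) by (simp add: m_def mult_left_mono_neg)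
    finally show "\<psi> t \<le> G'' p1 * m" .
  qed (use ell \<psi>con in auto)
  have J3: "integral {L..1-ell} \<psi> \<le> G'' p2 * m * (1 - ell - L)"
  proof (rule int_upper)
    fix t assume t: "t \<in> {L..1-ell}"
    then have t01: "t \<in> {0..1}" using ell by auto
    have "\<psi> t = G'' p2 * k t" using f_high[OF t] by (simp add: \<psi>_def)
    also have "\<dots> \<le> G'' p2 * m" using fine_lo[OF t01] G''neg(2) by (simp add: m_def mult_left_mono_neg)
    finally show "\<psi> t \<le> G'' p2 * m" .
  qed (use ell \<psi>con in auto)
  have \<psi>up: "\<psi> t \<le> K2 * M" if t01: "t \<in> {0..1}" for t
  proof -
    have "\<psi> t \<le> \<bar>G'' (f t)\<bar> * k t" using kpos[OF t01] by (simp add: \<psi>_def)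
    also have "\<dots> \<le> K2 * M" using K2b[of t] fine_up[OF t01] kpos[OF t01] K20
      by (intro mult_mono) (auto simp: M_def)
    finally show ?thesis .
  qed
  have J2: "integral {L-ell..L} \<psi> \<le> K2 * M * (L - (L - ell))"
    by (rule int_upper) (use ell \<psi>con \<psi>up in auto)
  have J4: "integral {1-ell..1} \<psi> \<le> K2 * M * (1 - (1 - ell))"
    by (rule int_upper) (use ell \<psi>con \<psi>up in auto)
  have "integral {0..1} \<psi> \<le> G'' p1 * m * (L - ell) + K2 * M * ell + G'' p2 * m * (1 - ell - L) + K2 * M * ell"
    using split J1 J2 J3 J4 by simp
  also have "\<dots> = k 0 * (P * exp (- 2 * \<delta>) + Q * exp (2 * \<delta>))"
    by (simp add: m_def M_def P_def Q_def algebra_simps)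
  also have "\<dots> \<le> k 0 * ((P + Q) / 2)" using brk k0pos by (simp add: mult_left_mono)
  also have "\<dots> \<le> c * exp (- 2 * Ka) * ((P + Q) / 2)"
    using k0lo PQ by (intro mult_right_mono_neg) auto
  finally have J: "integral {0..1} \<psi> \<le> c * exp (- 2 * Ka) * ((P + Q) / 2)" .
  have "\<sigma> * integral {0..1} (\<lambda>x. G' (g x)) \<le> c * exp (- 2 * Ka) * ((P + Q) / 2) + \<epsilon> * c"
    using int1 int2 int3 J by linarith
  also have "\<dots> = c * exp (- 2 * Ka) * (P + Q) / 4" by (simp add: eps field_simps)
  also have "\<dots> < 0" using cpos PQ by (simp add: mult_pos_neg divide_neg_pos)
  finally show ?thesis .
qed

lemma brk_lemma:
  fixes P Q :: real
  assumes "P \<le> 0" "0 \<le> Q" "P + Q < 0"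
  shows "\<exists>\<delta>0>0. \<forall>\<delta>. 0 \<le> \<delta> \<and> \<delta> \<le> \<delta>0 \<longrightarrow> P * exp (- 2 * \<delta>) + Q * exp (2 * \<delta>) \<le> (P + Q) / 2"
proof -
  define D where "D = 4 * Q - 2 * P + 1"
  have D: "D > 0" using assms by (simp add: D_def)
  define \<delta>0 where "\<delta>0 = min (1/4) (- (P + Q) / (2 * D))"
  have "\<delta>0 > 0" using D assms by (simp add: \<delta>0_def)
  moreover have "P * exp (- 2 * \<delta>) + Q * exp (2 * \<delta>) \<le> (P + Q) / 2" if d: "0 \<le> \<delta>" "\<delta> \<le> \<delta>0" for \<delta>
  proof -
    have "1 + (- 2 * \<delta>) \<le> exp (- 2 * \<delta>)" by (rule exp_ge_add_one_self)
    then have 1: "P * exp (- 2 * \<delta>) \<le> P * (1 - 2 * \<delta>)" using assms(1) by (simp add: mult_left_mono_neg)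
    have "exp (2 * \<delta>) \<le> 1 + 2 * (2 * \<delta>)" by (rule real_exp_bound_lemma) (use d in \<open>auto simp: \<delta>0_def\<close>)
    then have 2: "Q * exp (2 * \<delta>) \<le> Q * (1 + 4 * \<delta>)" using assms(2) by (simp add: mult_left_mono)
    have "\<delta> \<le> - (P + Q) / (2 * D)" using d by (simp add: \<delta>0_def)
    then have 3: "\<delta> * (2 * D) \<le> - (P + Q)" using D by (simp add: pos_le_divide_eq)
    have "P * (1 - 2 * \<delta>) + Q * (1 + 4 * \<delta>) = P + Q + \<delta> * (D - 1)" by (simp add: D_def algebra_simps)
    also have "\<dots> \<le> (P + Q) / 2" using 3 d(1) by (simp add: algebra_simps)
    finally show ?thesis using 1 2 by linarith
  qed
  ultimately show ?thesis by blast
qed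

lemma glob_max:
  fixes g g' :: "real \<Rightarrow> real"
  assumes per: "periodic1 g" and gd: "\<And>x. (g has_real_derivative g' x) (at x)"
  obtains x0 x1 where "x0 \<in> {0..1}" "x1 \<in> {0..1}" "\<And>y. g y \<le> g x0" "\<And>y. g x1 \<le> g y" "g' x0 = 0" "g' x1 = 0"
proof -
  have gc: "continuous_on {0..1} g" by (intro continuous_at_imp_continuous_on) (use gd DERIV_isCont in blast)
  obtain x0 where x0: "x0 \<in> {0..1}" "\<forall>y\<in>{0..1}. g y \<le> g x0"
    using continuous_attains_sup[OF compact_Icc _ gc] by auto
  obtain x1 where x1: "x1 \<in> {0..1}" "\<forall>y\<in>{0..1}. g x1 \<le> g y"
    using continuous_attains_inf[OF compact_Icc _ gc] by auto
  have m0: "g y \<le> g x0" for y using x0(2) frac_in[of y] per_frac[OF per, of y] by auto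
  have m1: "g x1 \<le> g y" for y using x1(2) frac_in[of y] per_frac[OF per, of y] by auto
  have "g' x0 = 0" by (rule DERIV_local_max[OF gd, of 1]) (use m0 in auto)
  moreover have "g' x1 = 0" by (rule DERIV_local_min[OF gd, of 1]) (use m1 in auto)
  ultimately show ?thesis using that x0(1) x1(1) m0 m1 by blast
qed

lemma range_lemma:
  fixes G V :: "real \<Rightarrow> real" and p1 p2 :: real
  assumes Gc: "continuous_on UNIV G" and Vc: "continuous_on UNIV V"
    and coercive: "filterlim G at_top at_top" "filterlim G at_top at_bot"
  shows "\<exists>R1 R2. R1 \<le> p1 \<and> p2 \<le> R2 \<and>
     (\<forall>g g' H \<theta>. (\<forall>x. (g has_real_derivative g' x) (at x)) \<longrightarrow> periodic1 g \<longrightarrow>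
        (\<forall>x. g' x + G (g x) + V x = H) \<longrightarrow> integral {0..1} g = \<theta> \<longrightarrow> \<theta> \<in> {p1 - 1..p2 + 1} \<longrightarrow>
        ((\<forall>x\<in>{0..1}. p1 \<le> g x) \<or> (\<forall>x\<in>{0..1}. g x \<le> p2)) \<longrightarrow>
        (\<forall>x\<in>{0..1}. R1 \<le> g x \<and> g x \<le> R2))"
proof -
  obtain BV where BV: "\<forall>x\<in>{0..1}. \<bar>V x\<bar> \<le> BV"
    using bound_cont[of 0 1 V] Vc continuous_on_subset by blast
  obtain BG where BG: "\<forall>p\<in>{p1-1..p2+1}. \<bar>G p\<bar> \<le> BG"
    using bound_cont[of "p1-1" "p2+1" G] Gc continuous_on_subset by blast
  define B where "B = BG + 2 * BV"
  have "eventually (\<lambda>p. B + 1 \<le> G p) at_top" using coercive(1) by (simp add: filterlim_at_top)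
  then obtain N2 where N2: "\<And>p. p \<ge> N2 \<Longrightarrow> B + 1 \<le> G p" by (auto simp: eventually_at_top_linorder)
  have "eventually (\<lambda>p. B + 1 \<le> G p) at_bot" using coercive(2) by (simp add: filterlim_at_top)
  then obtain N1 where N1: "\<And>p. p \<le> N1 \<Longrightarrow> B + 1 \<le> G p" by (auto simp: eventually_at_bot_linorder)
  define R1 where "R1 = min N1 p1"
  define R2 where "R2 = max N2 p2"
  have "\<forall>x\<in>{0..1}. R1 \<le> g x \<and> g x \<le> R2"
    if gd: "\<forall>x. (g has_real_derivative g' x) (at x)" and per: "periodic1 g"
      and geq: "\<forall>x. g' x + G (g x) + V x = H" and gi: "integral {0..1} g = \<theta>" and th: "\<theta> \<in> {p1 - 1..p2 + 1}"
      and side: "(\<forall>x\<in>{0..1}. p1 \<le> g x) \<or> (\<forall>x\<in>{0..1}. g x \<le> p2)"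
    for g g' H \<theta>
  proof -
    obtain x0 x1 where x: "x0 \<in> {0..1}" "x1 \<in> {0..1}" "\<And>y. g y \<le> g x0" "\<And>y. g x1 \<le> g y" "g' x0 = 0" "g' x1 = 0"
      using glob_max[OF per] gd by metis
    have gcon: "continuous_on {0..1} g" by (intro continuous_at_imp_continuous_on) (use gd DERIV_isCont in blast)
    have ib: "g x1 * (1 - 0) \<le> integral {0..1} g \<and> integral {0..1} g \<le> g x0 * (1 - 0)"
      by (rule int_bound[OF _ gcon]) (use x in auto)
    have H0: "H = G (g x0) + V x0" and H1: "H = G (g x1) + V x1" using geq x(5,6) by (metis add_0)+
    have Hb: "\<bar>H\<bar> \<le> BG + BV"
      using side
    proof
      assume a: "\<forall>x\<in>{0..1}. p1 \<le> g x"
      have "p1 \<le> g x1" using a x(2) by blast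
      then have "g x1 \<in> {p1-1..p2+1}" using ib gi th by auto
      then show ?thesis using H1 BG BV x(2) by fastforce
    next
      assume a: "\<forall>x\<in>{0..1}. g x \<le> p2"
      have "g x0 \<le> p2" using a x(1) by blast
      then have "g x0 \<in> {p1-1..p2+1}" using ib gi th by auto
      then show ?thesis using H0 BG BV x(1) by fastforce
    qed
    have "G (g x0) \<le> B" using H0 Hb BV x(1) unfolding B_def by fastforce
    then have "g x0 < N2" using N2[of "g x0"] by linarith
    moreover have "G (g x1) \<le> B" using H1 Hb BV x(2) unfolding B_def by fastforce
    then have "g x1 > N1" using N1[of "g x1"] by linarith
    ultimately show ?thesis using x(3,4) unfolding R1_def R2_def by (meson le_less_trans less_imp_le max.coboundedI1 min.coboundedI1 order_trans)
  qed
  then show ?thesis by (intro exI[of _ R1] exI[of _ R2]) (auto simp: R1_def R2_def)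
qed

theorem lemma5p3:
  fixes G G' G'' :: "real \<Rightarrow> real"
    and f f' V :: "real \<Rightarrow> real"
    and p1 p2 L K1 K2 ell \<theta>0 :: real
  assumes G_deriv: "\<And>x. (G has_real_derivative G' x) (at x)"
    and G'_deriv: "\<And>x. (G' has_real_derivative G'' x) (at x)"
    and G''_cont: "continuous_on UNIV G''"
    and coercive: "filterlim G at_top at_top" "filterlim G at_top at_bot"
    and p12: "p1 < p2" "G' p1 < 0" "0 < G' p2"
    and L_def: "L = G' p2 / (G' p2 - G' p1)"
    and K1_def: "K1 = (SUP p\<in>{p1..p2}. \<bar>G' p\<bar>)"
    and K2_def: "K2 = (SUP p\<in>{p1..p2}. \<bar>G'' p\<bar>)"
    and f_per: "periodic1 f"
    and f_deriv: "\<And>x. (f has_real_derivative f' x) (at x)"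
    and f'_cont: "continuous_on UNIV f'"
    and f'_lip: "\<exists>M. \<forall>x y. \<bar>f' x - f' y\<bar> \<le> M * \<bar>x - y\<bar>"
    and f_bounds: "\<And>x. p1 \<le> f x \<and> f x \<le> p2"
    and f_low: "\<And>x. x \<in> {0..L - ell} \<Longrightarrow> f x = p1"
    and f_high: "\<And>x. x \<in> {L..1 - ell} \<Longrightarrow> f x = p2"
    and f_int: "integral {0..1} (\<lambda>x. G' (f x)) = 0"
    and V_def: "\<And>x. V x = - f' x - G (f x)"
    and \<theta>0_def: "\<theta>0 = integral {0..1} f"
    and G''_neg: "G'' p1 < 0" "G'' p2 < 0"
    and ell_range: "0 < ell" "ell < min L (1 - L)"
    and key: "((L - ell) * G'' p1 + (1 - L - ell) * G'' p2) * exp (- K1) + 2 * ell * K2 * exp K1 < 0"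
  shows "\<exists>c0>0. \<forall>c. 0 < c \<and> c < c0 \<longrightarrow>
           (\<forall>g. corrector G V (\<theta>0 + c) g \<longrightarrow> integral {0..1} (\<lambda>x. G' (g x)) < 0) \<and>
           (\<forall>g. corrector G V (\<theta>0 - c) g \<longrightarrow> 0 < integral {0..1} (\<lambda>x. G' (g x)))"
proof -
  have G''c: "\<And>x. isCont G'' x" using G''_cont continuous_on_eq_continuous_at[OF open_UNIV] by blast
  have Gc: "\<And>x. isCont G x" using G_deriv DERIV_isCont by blast
  have G'c: "\<And>x. isCont G' x" using G'_deriv DERIV_isCont by blast
  have fc: "\<And>x. isCont f x" using f_deriv DERIV_isCont by blast
  have f'c: "\<And>x. isCont f' x" using f'_cont continuous_on_eq_continuous_at[OF open_UNIV] by blast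
  have GcU: "continuous_on UNIV G" using Gc by (simp add: continuous_at_imp_continuous_on)
  have VcU: "continuous_on UNIV V"
  proof -
    have "isCont (\<lambda>x. - f' x - G (f x)) x" for x using f'c isCont_o2[OF fc Gc] by (intro continuous_intros) auto
    then show ?thesis using V_def by (simp add: continuous_at_imp_continuous_on)
  qed
  have f01: "f 1 = f 0" using f_per unfolding periodic1_def by (metis add_0)
  have f_eq: "\<And>x. f' x + G (f x) + V x = 0" using V_def by simp
  have bddG': "bdd_above ((\<lambda>p. \<bar>G' p\<bar>) ` {p1..p2})"
  proof -
    obtain B where "\<forall>x\<in>{p1..p2}. \<bar>G' x\<bar> \<le> B"
      using bound_cont[of p1 p2 G'] G'c by (metis continuous_at_imp_continuous_on)
    then show ?thesis by (auto intro!: bdd_aboveI)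
  qed
  have bddG'': "bdd_above ((\<lambda>p. \<bar>G'' p\<bar>) ` {p1..p2})"
  proof -
    obtain B where "\<forall>x\<in>{p1..p2}. \<bar>G'' x\<bar> \<le> B"
      using bound_cont[of p1 p2 G''] G''c by (metis continuous_at_imp_continuous_on)
    then show ?thesis by (auto intro!: bdd_aboveI)
  qed
  have K1b: "\<And>x. \<bar>G' (f x)\<bar> \<le> K1"
    unfolding K1_def using f_bounds by (intro cSUP_upper bddG') auto
  have K2b: "\<And>x. \<bar>G'' (f x)\<bar> \<le> K2"
    unfolding K2_def using f_bounds by (intro cSUP_upper bddG'') auto
  have fcon: "continuous_on S f" for S using fc by (simp add: continuous_at_imp_continuous_on)
  have th0: "p1 \<le> \<theta>0 \<and> \<theta>0 \<le> p2"
    using int_bound[OF _ fcon, of 0 1 p1 p2] f_bounds \<theta>0_def by auto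
  obtain R1 R2 where R: "R1 \<le> p1" "p2 \<le> R2"
    and RP: "\<And>g g' H \<theta>. (\<forall>x. (g has_real_derivative g' x) (at x)) \<Longrightarrow> periodic1 g \<Longrightarrow>
        (\<forall>x. g' x + G (g x) + V x = H) \<Longrightarrow> integral {0..1} g = \<theta> \<Longrightarrow> \<theta> \<in> {p1 - 1..p2 + 1} \<Longrightarrow>
        ((\<forall>x\<in>{0..1}. p1 \<le> g x) \<or> (\<forall>x\<in>{0..1}. g x \<le> p2)) \<Longrightarrow>
        (\<forall>x\<in>{0..1}. R1 \<le> g x \<and> g x \<le> R2)"
    using range_lemma[OF GcU VcU coercive, of p1 p2] by blast
  have f_range: "\<And>x. R1 \<le> f x \<and> f x \<le> R2" using f_bounds R by (meson order_trans)
  obtain Ka where Ka0: "0 \<le> Ka" and Ka: "\<And>p. p \<in> {R1..R2} \<Longrightarrow> \<bar>G' p\<bar> \<le> Ka"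
    using bound_cont[of R1 R2 G'] G'c by (metis continuous_at_imp_continuous_on)
  obtain Kp where Kp0: "0 \<le> Kp" and Kp: "\<And>p. p \<in> {R1..R2} \<Longrightarrow> \<bar>G'' p\<bar> \<le> Kp"
    using bound_cont[of R1 R2 G''] G''c by (metis continuous_at_imp_continuous_on)
  define P where "P = ((L - ell) * G'' p1 + (1 - L - ell) * G'' p2) * exp (- K1)"
  define Q where "Q = 2 * ell * K2 * exp K1"
  have ell: "0 < ell" "ell < L" "ell < 1 - L" using ell_range by auto
  have PQ: "P + Q < 0" using key by (simp add: P_def Q_def)
  have P0: "P \<le> 0"
  proof -
    have "(L - ell) * G'' p1 \<le> 0" using ell G''_neg by (simp add: mult_nonneg_nonpos)
    moreover have "(1 - L - ell) * G'' p2 \<le> 0" using ell G''_neg by (simp add: mult_nonneg_nonpos)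
    ultimately show ?thesis unfolding P_def by (simp add: mult_nonpos_nonneg)
  qed
  have K20: "0 \<le> K2" using K2b[of 0] by linarith
  have Q0: "0 \<le> Q" unfolding Q_def using ell K20 by simp
  obtain \<delta>0 where d0: "\<delta>0 > 0" and brk: "\<And>\<delta>. 0 \<le> \<delta> \<Longrightarrow> \<delta> \<le> \<delta>0 \<Longrightarrow> P * exp (- 2 * \<delta>) + Q * exp (2 * \<delta>) \<le> (P + Q) / 2"
    using brk_lemma[OF P0 Q0 PQ] by blast
  define \<epsilon> where "\<epsilon> = - exp (- 2 * Ka) * (P + Q) / 4"
  have epos: "\<epsilon> > 0" unfolding \<epsilon>_def using PQ by (simp add: mult_pos_neg)
  have "uniformly_continuous_on {R1..R2} G''"
    using compact_uniformly_continuous[OF _ compact_Icc] G''c by (metis continuous_at_imp_continuous_on)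
  then obtain \<eta> where eta: "\<eta> > 0" and uc0: "\<And>p q. p \<in> {R1..R2} \<Longrightarrow> q \<in> {R1..R2} \<Longrightarrow> dist q p < \<eta> \<Longrightarrow> dist (G'' q) (G'' p) < \<epsilon>"
    unfolding uniformly_continuous_on_def using epos by metis
  have uc: "\<And>p q. p \<in> {R1..R2} \<Longrightarrow> q \<in> {R1..R2} \<Longrightarrow> \<bar>p - q\<bar> < \<eta> \<Longrightarrow> \<bar>G'' p - G'' q\<bar> < \<epsilon>"
    using uc0 by (simp add: dist_real_def)
  define E where "E = exp (4 * Ka)"
  have E0: "E > 0" by (simp add: E_def)
  define c0 where "c0 = min 1 (min (\<eta> / (2 * E)) (\<delta>0 / (Kp * E + 1)))"
  have kpe: "Kp * E + 1 > 0" using E0 Kp0 by (simp add: add_nonneg_pos)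
  then have c0pos: "c0 > 0" using eta d0 E0 by (simp add: c0_def)
  have main: "\<sigma> * integral {0..1} (\<lambda>x. G' (g x)) < 0"
    if sig: "\<sigma> = 1 \<or> \<sigma> = -1" and c: "0 < c" "c < c0" and cor: "corrector G V (\<theta>0 + \<sigma> * c) g" for \<sigma> c g
  proof -
    obtain g' H where gd: "\<And>x. (g has_real_derivative g' x) (at x)" and g_eq: "\<And>x. g' x + G (g x) + V x = H"
      and gper: "periodic1 g" and gi: "integral {0..1} g = \<theta>0 + \<sigma> * c"
      using cor unfolding corrector_def by blast
    have g01: "g 1 = g 0" using gper unfolding periodic1_def by (metis add_0)
    have gcon: "continuous_on S g" for S by (intro continuous_at_imp_continuous_on) (use gd DERIV_isCont in blast)
    have kint: "integral {0..1} (\<lambda>x. \<sigma> * (g x - f x)) = c"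
    proof -
      have "integral {0..1} (\<lambda>x. \<sigma> * (g x - f x)) = \<sigma> * integral {0..1} (\<lambda>x. g x - f x)"
        by (rule integral_mult_right)
      also have "integral {0..1} (\<lambda>x. g x - f x) = integral {0..1} g - integral {0..1} f"
        by (rule integral_diff) (use integrable_continuous_interval[OF gcon] integrable_continuous_interval[OF fcon] in auto)
      finally show ?thesis using gi \<theta>0_def sig by auto
    qed
    have small: "c * E < \<eta>"
    proof -
      have "c < \<eta> / (2 * E)" using c by (simp add: c0_def)
      then have "c * (2 * E) < \<eta>" using E0 by (simp add: pos_less_divide_eq)
      moreover have "0 < c * E" using c E0 by simp
      moreover have "c * (2 * E) = 2 * (c * E)" by simp
      ultimately show ?thesis by linarith
    qed
    have dlt: "Kp * E * c \<le> Kp * E * c" by simp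
    have dle: "Kp * E * c \<le> \<delta>0"
    proof -
      have "c < \<delta>0 / (Kp * E + 1)" using c by (simp add: c0_def)
      then have "c * (Kp * E + 1) < \<delta>0" using kpe by (simp add: pos_less_divide_eq)
      then show ?thesis using c by (simp add: algebra_simps)
    qed
    have dnn: "0 \<le> Kp * E * c" using Kp0 E0 c by simp
    have th: "\<theta>0 + \<sigma> * c \<in> {p1 - 1..p2 + 1}" using th0 sig c by (auto simp: c0_def)
    have range_imp: "(\<forall>x\<in>{0..1}. 0 < \<sigma> * (g x - f x)) \<Longrightarrow> \<forall>x\<in>{0..1}. R1 \<le> g x \<and> g x \<le> R2"
    proof -
      assume pos: "\<forall>x\<in>{0..1}. 0 < \<sigma> * (g x - f x)"
      have "(\<forall>x\<in>{0..1}. p1 \<le> g x) \<or> (\<forall>x\<in>{0..1}. g x \<le> p2)"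
        using sig
      proof
        assume s1: "\<sigma> = 1"
        have "p1 \<le> g x" if x: "x \<in> {0..1}" for x
        proof -
          have "0 < g x - f x" using pos x s1 by simp
          then show ?thesis using f_bounds[of x] by linarith
        qed
        then show ?thesis by blast
      next
        assume s1: "\<sigma> = -1"
        have "g x \<le> p2" if x: "x \<in> {0..1}" for x
        proof -
          have "0 < - (g x - f x)" using pos x s1 by simp
          then show ?thesis using f_bounds[of x] by linarith
        qed
        then show ?thesis by blast
      qed
      moreover have "\<forall>x. (g has_real_derivative g' x) (at x)" using gd by blast
      moreover have "\<forall>x. g' x + G (g x) + V x = H" using g_eq by blast
      ultimately show ?thesis using RP[of g g' H "\<theta>0 + \<sigma> * c"] gper gi th by blast
    qed
    show ?thesis
      by (rule core[OF G_deriv G'_deriv G''c f_deriv gd f01 g01 f_eq g_eq sig c(1) kint range_imp f_range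
          Ka0 Ka Kp0 Kp uc small[unfolded E_def] dlt[unfolded E_def] K1b K2b f_int f_low f_high G''_neg ell
          P_def Q_def brk[OF dnn[unfolded E_def] dle[unfolded E_def]] PQ \<epsilon>_def])
  qed
  have A: "integral {0..1} (\<lambda>x. G' (g x)) < 0" if "0 < c" "c < c0" "corrector G V (\<theta>0 + c) g" for c g
    using main[of 1 c g] that by simp
  have B: "0 < integral {0..1} (\<lambda>x. G' (g x))" if "0 < c" "c < c0" "corrector G V (\<theta>0 - c) g" for c g
    using main[of "-1" c g] that by simp
  show ?thesis using c0pos A B by blast
qed

end
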